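(* Let $f:\mathbb Z^+\to[0,\infty)$ be nondecreasing with $f(0)=0$ and $f(z)>0$ for $z>0$, and let $\mathcal H(\varrho)=\mathbf E^\varrho f(\omega)$ for $\varrho\in(0,\infty)$. If $f$ is convex (respectively concave), then $\mathcal H$ is convex (respectively concave) on $(0,\infty)$. Moreover, in this case $\mathcal H''(\varrho)>0$ (respectively $\mathcal H''(\varrho)<0$) for all $\varrho>0$ if and only if $f$ is not a linear function.
   Context: Set $f(0)!=1$, $f(z)!=\prod_{y=1}^zf(y)$. Let $\bar\theta=\lim_{z\to\infty}\log f(z)$ (assumed $>-\infty$, automatically true here). For $\theta<\bar\theta$, $Z(\theta)=\sum_{z\ge0}e^{\theta z}/f(z)!<\infty$ and $\mu^\theta(z)=e^{\theta z}/(Z(\theta)f(z)!)$, $z\in\mathbb Z^+$. The mean $\varrho(\theta)=\sum_zz\mu^\theta(z)$ is a strictly increasing bijection onto $(0,\infty)$; $\mathbf E^\varrho$ denotes expectation of $\omega\sim\mu^{\theta(\varrho)}$. ($\mathcal H$ is the hydrodynamic flux of the totally asymmetric zero range process with jump rate $f$.) *)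

theory Defs
  imports "HOL-Analysis.Analysis"
begin

definition ffact :: "(nat \<Rightarrow> real) \<Rightarrow> nat \<Rightarrow> real" where
  "ffact f z = (\<Prod>y\<in>{1..z}. f y)"

definition theta_bar :: "(nat \<Rightarrow> real) \<Rightarrow> ereal" where
  "theta_bar f = lim (\<lambda>z. ereal (ln (f z)))"

definition Zpart :: "(nat \<Rightarrow> real) \<Rightarrow> real \<Rightarrow> real" where
  "Zpart f \<theta> = (\<Sum>z. exp (\<theta> * real z) / ffact f z)"

definition mu :: "(nat \<Rightarrow> real) \<Rightarrow> real \<Rightarrow> nat \<Rightarrow> real" where
  "mu f \<theta> z = exp (\<theta> * real z) / (Zpart f \<theta> * ffact f z)"

definition rho :: "(nat \<Rightarrow> real) \<Rightarrow> real \<Rightarrow> real" where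
  "rho f \<theta> = (\<Sum>z. real z * mu f \<theta> z)"

definition theta_of :: "(nat \<Rightarrow> real) \<Rightarrow> real \<Rightarrow> real" where
  "theta_of f \<rho> = (THE \<theta>. ereal \<theta> < theta_bar f \<and> rho f \<theta> = \<rho>)"

definition flux :: "(nat \<Rightarrow> real) \<Rightarrow> real \<Rightarrow> real" where
  "flux f \<rho> = (\<Sum>z. f z * mu f (theta_of f \<rho>) z)"

definition convex_seq :: "(nat \<Rightarrow> real) \<Rightarrow> bool" where
  "convex_seq f \<longleftrightarrow> (\<forall>z. f (z+1) - f z \<le> f (z+2) - f (z+1))"

definition concave_seq :: "(nat \<Rightarrow> real) \<Rightarrow> bool" where
  "concave_seq f \<longleftrightarrow> (\<forall>z. f (z+1) - f z \<ge> f (z+2) - f (z+1))"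

definition linear_seq :: "(nat \<Rightarrow> real) \<Rightarrow> bool" where
  "linear_seq f \<longleftrightarrow> (\<exists>a b. \<forall>z. f z = a * real z + b)"

end

theory Submission
  imports Defs
begin
definition cvx :: "(nat \<Rightarrow> real) \<Rightarrow> bool" where
  "cvx h \<longleftrightarrow> (\<forall>z. h (z+1) - h z \<le> h (z+2) - h (z+1))"

lemma cvx_diff_mono:
  assumes "cvx h" "i \<le> j"
  shows "h (Suc i) - h i \<le> h (Suc j) - h j"
  using assms(2)
proof (induction j rule: dec_induct)
  case base then show ?case by simp
next
  case (step j)
  have "h (j+1) - h j \<le> h (j+2) - h (j+1)" using assms(1) unfolding cvx_def by blast
  then show ?case using step by (simp add: numeral_2_eq_2)
qed

lemma three_point:
  assumes "cvx h" "a \<le> b" "b \<le> c"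
  shows "(real c - real b) * (h b - h a) \<le> (real b - real a) * (h c - h b)"
proof -
  define d where "d = h (Suc b) - h b"
  have "h b - h a = (\<Sum>i=a..<b. h (Suc i) - h i)" using sum_Suc_diff'[OF assms(2), of h] by simp
  also have "\<dots> \<le> (\<Sum>i=a..<b. d)"
    by (rule sum_mono) (use cvx_diff_mono[OF assms(1)] d_def in auto)
  finally have 1: "h b - h a \<le> (real b - real a) * d" using assms(2) by (simp add: of_nat_diff)
  have "(\<Sum>i=b..<c. d) \<le> (\<Sum>i=b..<c. h (Suc i) - h i)"
    by (rule sum_mono) (use cvx_diff_mono[OF assms(1)] d_def in auto)
  also have "\<dots> = h c - h b" using sum_Suc_diff'[OF assms(3), of h] by simp
  finally have 2: "(real c - real b) * d \<le> h c - h b" using assms(3) by (simp add: of_nat_diff)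
  have "(real c - real b) * (h b - h a) \<le> (real c - real b) * ((real b - real a) * d)"
    using 1 assms by (intro mult_left_mono) auto
  also have "\<dots> = (real b - real a) * ((real c - real b) * d)" by simp
  also have "\<dots> \<le> (real b - real a) * (h c - h b)"
    using 2 assms by (intro mult_left_mono) auto
  finally show ?thesis .
qed

lemma chord:
  assumes "cvx h" "u < v"
  shows "(h z - (h u + (h v - h u) / (real v - real u) * (real z - real u)))
           * ((real z - real u) * (real z - real v)) \<ge> 0"
proof -
  have vu: "real v - real u > 0" using assms by simp
  define s where "s = (h v - h u) / (real v - real u)"
  have hs: "h v - h u = s * (real v - real u)" using vu s_def by simp
  consider "z \<le> u" | "u \<le> z \<and> z \<le> v" | "v \<le> z" by linarith
  then show ?thesis
  proof cases
    case 1
    have t: "(real v - real u) * (h u - h z) \<le> (real u - real z) * (h v - h u)"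
      using three_point[OF assms(1) 1, of v] assms by simp
    hence "(real v - real u) * (h u - h z) \<le> (real v - real u) * ((real u - real z) * s)"
      using hs by (simp add: algebra_simps)
    hence "h u - h z \<le> (real u - real z) * s" using vu by simp
    hence "h z - (h u + s * (real z - real u)) \<ge> 0" by (simp add: algebra_simps)
    moreover have "(real z - real u) * (real z - real v) \<ge> 0"
      using 1 assms by (intro mult_nonpos_nonpos) auto
    ultimately show ?thesis unfolding s_def by simp
  next
    case 2
    have t: "(real v - real z) * (h z - h u) \<le> (real z - real u) * (h v - h z)"
      using three_point[OF assms(1)] 2 by simp
    have "(real v - real u) * (h z - h u) = (real v - real z) * (h z - h u) + (real z - real u) * (h z - h u)"
      by (simp add: algebra_simps)
    also have "\<dots> \<le> (real z - real u) * (h v - h z) + (real z - real u) * (h z - h u)" using t by simp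
    also have "\<dots> = (real z - real u) * (h v - h u)" by (simp add: algebra_simps)
    also have "\<dots> = (real v - real u) * ((real z - real u) * s)" unfolding hs by (simp add: algebra_simps)
    finally have "h z - h u \<le> (real z - real u) * s" using vu by simp
    hence "h z - (h u + s * (real z - real u)) \<le> 0" by (simp add: algebra_simps)
    moreover have "(real z - real u) * (real z - real v) \<le> 0"
      using 2 by (intro mult_nonneg_nonpos) auto
    ultimately show ?thesis unfolding s_def by (simp add: mult_nonpos_nonpos)
  next
    case 3
    have t: "(real z - real v) * (h v - h u) \<le> (real v - real u) * (h z - h v)"
      using three_point[OF assms(1), of u v z] 3 assms by simp
    have "(real v - real u) * ((real z - real u) * s) = (real z - real u) * (h v - h u)"
      unfolding hs by (simp add: algebra_simps)
    also have "\<dots> = (real z - real v) * (h v - h u) + (real v - real u) * (h v - h u)"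
      by (simp add: algebra_simps)
    also have "\<dots> \<le> (real v - real u) * (h z - h v) + (real v - real u) * (h v - h u)" using t by simp
    also have "\<dots> = (real v - real u) * (h z - h u)" by (simp add: algebra_simps)
    finally have "(real z - real u) * s \<le> h z - h u" using vu by simp
    hence "h z - (h u + s * (real z - real u)) \<ge> 0" by (simp add: algebra_simps)
    moreover have "(real z - real u) * (real z - real v) \<ge> 0"
      using 3 assms by (intro mult_nonneg_nonneg) auto
    ultimately show ?thesis unfolding s_def by simp
  qed
qed

lemma cvx_sub_lin: "cvx h \<Longrightarrow> cvx (\<lambda>n. h n - (A + B * real n))"
  unfolding cvx_def by (auto simp: algebra_simps)

lemma cvx_zero_eventually:
  assumes "cvx g" "g 0 = 0" "\<And>n. n \<ge> N \<Longrightarrow> g n = 0"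
  shows "g n = 0"
proof -
  have dn: "g (Suc k) - g k \<le> 0" for k
  proof -
    have "g (Suc k) - g k \<le> g (Suc (max k N)) - g (max k N)"
      by (rule cvx_diff_mono[OF assms(1)]) simp
    also have "\<dots> = 0" using assms(3) by simp
    finally show ?thesis .
  qed
  have "g n - g 0 = (\<Sum>i=0..<n. g (Suc i) - g i)" using sum_Suc_diff'[of 0 n g] by simp
  also have "\<dots> \<le> 0" by (rule sum_nonpos) (use dn in auto)
  finally have 1: "g n \<le> 0" using assms(2) by simp
  have "g (max n N) - g n = (\<Sum>i=n..<max n N. g (Suc i) - g i)" using sum_Suc_diff'[of n "max n N" g] by simp
  also have "\<dots> \<le> 0" by (rule sum_nonpos) (use dn in auto)
  finally have 2: "g n \<ge> 0" using assms(3)[of "max n N"] by simp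
  from 1 2 show ?thesis by simp
qed

lemma sign_lemma:
  fixes p h :: "nat \<Rightarrow> real" and b c :: real
  assumes cvx: "cvx h" and ppos: "\<And>n. p n > 0"
    and s0: "summable (\<lambda>n. p n * (real n ^ 2 + b * real n + c))"
    and s1: "summable (\<lambda>n. p n * real n * (real n ^ 2 + b * real n + c))"
    and sh: "summable (\<lambda>n. p n * h n * (real n ^ 2 + b * real n + c))"
    and z0: "(\<Sum>n. p n * (real n ^ 2 + b * real n + c)) = 0"
    and z1: "(\<Sum>n. p n * real n * (real n ^ 2 + b * real n + c)) = 0"
  shows "(\<Sum>n. p n * h n * (real n ^ 2 + b * real n + c)) \<ge> 0 \<and>
         ((\<Sum>n. p n * h n * (real n ^ 2 + b * real n + c)) = 0 \<longrightarrow> (\<exists>\<alpha> \<beta>. \<forall>n. h n = \<alpha> + \<beta> * real n))"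
proof -
  define q where "q = (\<lambda>y::real. y ^ 2 + b * y + c)"
  have s0': "summable (\<lambda>n. p n * q (real n))" and s1': "summable (\<lambda>n. p n * real n * q (real n))"
    and sh': "summable (\<lambda>n. p n * h n * q (real n))"
    and z0': "(\<Sum>n. p n * q (real n)) = 0" and z1': "(\<Sum>n. p n * real n * q (real n)) = 0"
    using s0 s1 sh z0 z1 by (simp_all add: q_def)
  have "\<exists>n0. q (real n0) < 0"
  proof (rule ccontr)
    assume "\<not> ?thesis"
    hence nn: "\<And>n. q (real n) \<ge> 0" by (simp add: not_less)
    have "\<forall>n. p n * q (real n) = 0"
      using suminf_eq_zero_iff[OF s0'] nn ppos z0' by (simp add: less_imp_le)
    hence "\<And>n. q (real n) = 0" using ppos by (metis mult_eq_0_iff order_less_irrefl)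
    from this[of 0] this[of 1] this[of 2] show False by (simp add: q_def power2_eq_square)
  qed
  then obtain n0 where n0: "q (real n0) < 0" by blast
  define d where "d = b^2 - 4*c"
  have "q (real n0) = (real n0 + b/2)^2 - d/4" by (simp add: q_def d_def power2_eq_square field_simps)
  moreover have "(real n0 + b/2)^2 \<ge> 0" by simp
  ultimately have dpos: "d > 0" using n0 by linarith
  define r1 where "r1 = (-b - sqrt d)/2"
  define r2 where "r2 = (-b + sqrt d)/2"
  have r12: "r1 \<le> r2" using dpos by (simp add: r1_def r2_def)
  have qfac: "q y = (y - r1) * (y - r2)" for y
  proof -
    have sq: "sqrt d * sqrt d = d" using dpos by simp
    have e1: "r1 + r2 = - b" by (simp add: r1_def r2_def field_simps)
    have "r1 * r2 = (b * b - sqrt d * sqrt d) / 4" by (simp add: r1_def r2_def field_simps)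
    hence e2: "r1 * r2 = c" using sq by (simp add: d_def power2_eq_square)
    have "(y - r1) * (y - r2) = y^2 - (r1 + r2) * y + r1 * r2" by (simp add: power2_eq_square algebra_simps)
    thus ?thesis using e1 e2 by (simp add: q_def)
  qed
  define u where "u = nat \<lfloor>r1\<rfloor>"
  define v where "v = max (u+1) (nat \<lceil>r2\<rceil>)"
  have uv: "u < v" by (simp add: v_def)
  have compat: "((real z - real u) * (real z - real v)) * q (real z) \<ge> 0" if zu: "z \<noteq> u" and zv: "z \<noteq> v" for z
  proof -
    consider "z < u" | "u < z \<and> z < v" | "v < z" using zu zv by linarith
    then show ?thesis
    proof cases
      case 1
      hence "real z < r1" unfolding u_def by linarith
      hence "q (real z) \<ge> 0" unfolding qfac using r12 by (intro mult_nonpos_nonpos) auto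
      moreover have "(real z - real u) * (real z - real v) \<ge> 0" using 1 uv
        by (intro mult_nonpos_nonpos) auto
      ultimately show ?thesis by simp
    next
      case 2
      hence "real z > r1" unfolding u_def by linarith
      moreover have "real z < r2"
      proof -
        have "z < nat \<lceil>r2\<rceil>" using 2 unfolding v_def by auto
        thus ?thesis by linarith
      qed
      ultimately have "q (real z) \<le> 0" unfolding qfac by (intro mult_nonneg_nonpos) auto
      moreover have "(real z - real u) * (real z - real v) \<le> 0" using 2
        by (intro mult_nonneg_nonpos) auto
      ultimately show ?thesis by (simp add: mult_nonpos_nonpos)
    next
      case 3
      hence "real z > r2" unfolding v_def by linarith
      hence "q (real z) \<ge> 0" unfolding qfac using r12 by (intro mult_nonneg_nonneg) auto
      moreover have "(real z - real u) * (real z - real v) \<ge> 0" using 3 uv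
        by (intro mult_nonneg_nonneg) auto
      ultimately show ?thesis by simp
    qed
  qed
  define sl where "sl = (h v - h u) / (real v - real u)"
  define A where "A = h u - sl * real u"
  define g where "g = (\<lambda>n. h n - (A + sl * real n))"
  have gch: "g z * ((real z - real u) * (real z - real v)) \<ge> 0" for z
  proof -
    have "g z = h z - (h u + sl * (real z - real u))" by (simp add: g_def A_def algebra_simps)
    thus ?thesis using chord[OF cvx uv, of z] unfolding sl_def by simp
  qed
  have gu: "g u = 0" by (simp add: g_def A_def)
  have gv: "g v = 0"
  proof -
    have vu0: "real v - real u \<noteq> 0" using uv by simp
    have "sl * (real v - real u) = h v - h u" unfolding sl_def using vu0 by simp
    thus ?thesis by (simp add: g_def A_def algebra_simps)
  qed
  have gq: "g z * q (real z) \<ge> 0" for z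
  proof (cases "z = u \<or> z = v")
    case True then show ?thesis using gu gv by auto
  next
    case False
    define r where "r = (real z - real u) * (real z - real v)"
    have r0: "r \<noteq> 0" using False by (simp add: r_def)
    have h1: "0 \<le> g z * r" using gch[of z] unfolding r_def by simp
    have h2: "0 \<le> r * q (real z)" using compat[of z] False unfolding r_def by simp
    have "0 \<le> (g z * r) * (r * q (real z))" using h1 h2 by (rule mult_nonneg_nonneg)
    also have "\<dots> = (g z * q (real z)) * r^2" by (simp add: power2_eq_square algebra_simps)
    finally show ?thesis using r0 by (simp add: zero_le_mult_iff)
  qed
  have eqsum: "(\<lambda>n. p n * g n * q (real n)) = (\<lambda>n. p n * h n * q (real n) - A * (p n * q (real n)) - sl * (p n * real n * q (real n)))"
    by (rule ext) (simp add: g_def algebra_simps)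
  have sg: "summable (\<lambda>n. p n * g n * q (real n))"
    unfolding eqsum by (intro summable_diff summable_mult s0' s1' sh')
  have "(\<Sum>n. p n * g n * q (real n)) = (\<Sum>n. p n * h n * q (real n)) - A * (\<Sum>n. p n * q (real n)) - sl * (\<Sum>n. p n * real n * q (real n))"
  proof -
    have a1: "summable (\<lambda>n. A * (p n * q (real n)))" by (intro summable_mult s0')
    have a2: "summable (\<lambda>n. sl * (p n * real n * q (real n)))" by (intro summable_mult s1')
    have "(\<Sum>n. p n * h n * q (real n) - A * (p n * q (real n)) - sl * (p n * real n * q (real n)))
       = (\<Sum>n. p n * h n * q (real n) - A * (p n * q (real n))) - (\<Sum>n. sl * (p n * real n * q (real n)))"
      by (rule suminf_diff[OF summable_diff[OF sh' a1] a2, symmetric])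
    also have "(\<Sum>n. p n * h n * q (real n) - A * (p n * q (real n))) = (\<Sum>n. p n * h n * q (real n)) - (\<Sum>n. A * (p n * q (real n)))"
      by (rule suminf_diff[OF sh' a1, symmetric])
    finally show ?thesis unfolding eqsum by (simp add: suminf_mult[OF s0'] suminf_mult[OF s1'])
  qed
  hence main: "(\<Sum>n. p n * h n * q (real n)) = (\<Sum>n. p n * g n * q (real n))" using z0' z1' by simp
  have nonneg: "\<And>n. p n * g n * q (real n) \<ge> 0"
    using gq ppos by (metis less_imp_le mult.assoc mult_nonneg_nonneg)
  have ge: "(\<Sum>n. p n * h n * q (real n)) \<ge> 0" unfolding main by (intro suminf_nonneg sg nonneg)
  have eq: "\<exists>\<alpha> \<beta>. \<forall>n. h n = \<alpha> + \<beta> * real n" if zz: "(\<Sum>n. p n * h n * q (real n)) = 0"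
  proof -
    have "\<forall>n. p n * g n * q (real n) = 0" using suminf_eq_zero_iff[OF sg nonneg] zz main by simp
    hence gq0: "\<And>n. g n * q (real n) = 0" using ppos by (metis mult.assoc mult_eq_0_iff order_less_irrefl)
    have c0: "q 0 \<noteq> 0"
    proof
      assume "q 0 = 0"
      hence cz: "c = 0" by (simp add: q_def)
      have ee: "(\<lambda>n. p n * real n * (real n + b)^2) = (\<lambda>n. p n * real n * q (real n) + b * (p n * q (real n)))"
        by (rule ext) (simp add: q_def cz power2_eq_square algebra_simps)
      have ss: "summable (\<lambda>n. p n * real n * (real n + b)^2)" unfolding ee
        by (intro summable_add summable_mult s0' s1')
      have "(\<Sum>n. p n * real n * (real n + b)^2) = 0" unfolding ee
        using suminf_add[OF s1' summable_mult[OF s0', of b], symmetric] z0' z1' suminf_mult[OF s0', of b] by simp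
      hence "\<forall>n. p n * real n * (real n + b)^2 = 0"
        using suminf_eq_zero_iff[OF ss] ppos by (simp add: less_imp_le)
      hence "p 1 * real 1 * (real 1 + b)^2 = 0" "p 2 * real 2 * (real 2 + b)^2 = 0" by blast+
      hence "(1 + b)^2 = 0" "(2 + b)^2 = 0" using ppos[of 1] ppos[of 2] by simp_all
      thus False by simp
    qed
    have g0: "g 0 = 0" using gq0[of 0] c0 by simp
    have gN: "g n = 0" if "n \<ge> nat \<lceil>r2\<rceil> + 1" for n
    proof -
      have "real n > r2" using that by linarith
      hence "q (real n) > 0" unfolding qfac using r12 by (intro mult_pos_pos) auto
      thus ?thesis using gq0[of n] by simp
    qed
    have cg: "cvx g" unfolding g_def by (rule cvx_sub_lin[OF cvx])
    have "g n = 0" for n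
      using cvx_zero_eventually[of g "nat \<lceil>r2\<rceil> + 1" n] cg g0 gN by blast
    hence "\<forall>n. h n = A + sl * real n" unfolding g_def by auto
    thus ?thesis by blast
  qed
  show ?thesis using ge eq unfolding q_def by simp
qed

locale zrp =
  fixes f :: "nat \<Rightarrow> real"
  assumes fmono: "mono f" and f0: "f 0 = 0" and fpos: "\<And>z. z > 0 \<Longrightarrow> f z > 0"
begin

definition a :: "nat \<Rightarrow> real" where "a n = 1 / ffact f n"
definition S :: "nat \<Rightarrow> real \<Rightarrow> real" where "S k x = (\<Sum>n. real n ^ k * a n * x ^ n)"

lemma f_nonneg: "f z \<ge> 0"
  using fpos[of z] f0 by (cases z) auto

lemma ffact_Suc: "ffact f (Suc n) = f (Suc n) * ffact f n"
  unfolding ffact_def by (simp add: prod.nat_ivl_Suc')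

lemma ffact_pos: "ffact f n > 0"
  unfolding ffact_def by (rule prod_pos) (use fpos in auto)

lemma a_pos: "a n > 0" using ffact_pos by (simp add: a_def)

lemma a_Suc: "a (Suc n) = a n / f (Suc n)"
  by (simp add: a_def ffact_Suc)

lemma fa_Suc: "f (Suc n) * a (Suc n) = a n"
  using fpos[of "Suc n"] by (simp add: a_Suc)

lemma summ0:
  assumes "\<bar>x\<bar> < f z"
  shows "summable (\<lambda>n. a n * x ^ n)"
proof (rule summable_ratio_test[where c = "\<bar>x\<bar> / f z" and N = z])
  have fz: "f z > 0" using assms by linarith
  show "\<bar>x\<bar> / f z < 1" using assms fz by simp
  fix n assume n: "z \<le> n"
  have fs: "f (Suc n) \<ge> f z" using fmono n by (simp add: monoD)
  have "norm (a (Suc n) * x ^ Suc n) = (a n * \<bar>x\<bar>^n) * (\<bar>x\<bar> / f (Suc n))"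
    using a_pos[of n] fz fs by (simp add: a_Suc abs_mult power_abs field_simps)
  also have "\<dots> \<le> (a n * \<bar>x\<bar>^n) * (\<bar>x\<bar> / f z)"
    using fz fs a_pos[of n] by (intro mult_left_mono divide_left_mono) auto
  also have "\<dots> = \<bar>x\<bar> / f z * norm (a n * x ^ n)"
    using a_pos[of n] by (simp add: abs_mult power_abs)
  finally show "norm (a (Suc n) * x ^ Suc n) \<le> \<bar>x\<bar> / f z * norm (a n * x ^ n)" .
qed

lemma summk:
  assumes "\<bar>x\<bar> < f z"
  shows "summable (\<lambda>n. real n ^ k * a n * x ^ n)"
  using assms
proof (induction k arbitrary: x)
  case 0 then show ?case using summ0 by simp
next
  case (Suc k)
  have "summable (\<lambda>n. diffs (\<lambda>n. real n ^ k * a n) n * x ^ n)"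
    by (rule termdiff_converges[where K = "f z"]) (use Suc in auto)
  hence "summable (\<lambda>n. diffs (\<lambda>n. real n ^ k * a n) n * x ^ n * x)" by (rule summable_mult2)
  hence "summable (\<lambda>n. real (Suc n) ^ Suc k * a (Suc n) * x ^ (Suc n))"
    by (simp add: diffs_def algebra_simps)
  thus ?case by (subst summable_Suc_iff[symmetric]) simp
qed

lemma S_fun: "S k = (\<lambda>x. \<Sum>n. (real n ^ k * a n) * x ^ n)"
  by (simp add: S_def fun_eq_iff)

lemma DERIV_S:
  assumes "0 < x" "x < f z"
  shows "DERIV (S k) x :> S (Suc k) x / x"
proof -
  define K where "K = (x + f z) / 2"
  have sK: "summable (\<lambda>n. (real n ^ k * a n) * K ^ n)"
    using summk[of K z k] assms by (simp add: K_def mult.assoc)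
  have "DERIV (S k) x :> (\<Sum>n. diffs (\<lambda>n. real n ^ k * a n) n * x ^ n)"
    unfolding S_fun by (rule termdiffs_strong[OF sK]) (use assms in \<open>simp add: K_def\<close>)
  moreover have "(\<Sum>n. diffs (\<lambda>n. real n ^ k * a n) n * x ^ n) = S (Suc k) x / x"
  proof -
    define g where "g = (\<lambda>n. real n ^ Suc k * a n * x ^ n)"
    have sg: "summable g" unfolding g_def using summk[of x z "Suc k"] assms by simp
    have sd: "summable (\<lambda>n. diffs (\<lambda>n. real n ^ k * a n) n * x ^ n)"
      by (rule termdiff_converges[where K = "f z"]) (use assms summk in auto)
    have "(\<Sum>n. diffs (\<lambda>n. real n ^ k * a n) n * x ^ n) * x = (\<Sum>n. diffs (\<lambda>n. real n ^ k * a n) n * x ^ n * x)"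
      by (rule suminf_mult2[OF sd])
    also have "\<dots> = (\<Sum>n. g (Suc n))" by (simp add: g_def diffs_def algebra_simps)
    also have "\<dots> = suminf g - g 0" by (rule suminf_split_head[OF sg])
    also have "\<dots> = S (Suc k) x" by (simp add: g_def S_def)
    finally show ?thesis using assms by (simp add: field_simps)
  qed
  ultimately show ?thesis by simp
qed

end

context zrp begin

definition Dd :: "real \<Rightarrow> real" where "Dd x = S 0 x * S 2 x - (S 1 x)^2"
definition bb :: "real \<Rightarrow> real" where "bb x = (S 1 x * S 2 x - S 0 x * S 3 x) / Dd x"
definition cc :: "real \<Rightarrow> real" where "cc x = (S 1 x * S 3 x - (S 2 x)^2) / Dd x"
definition TT :: "real \<Rightarrow> real" where "TT x = x * (2 * S 1 x + S 0 x + bb x * S 0 x)"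

lemma alg1: fixes s0 s1 s2 s3 D :: real
  assumes "D \<noteq> 0" "D = s0 * s2 - s1^2"
  shows "s2 + ((s1 * s2 - s0 * s3)/D) * s1 + ((s1 * s3 - s2^2)/D) * s0 = 0"
proof -
  have "s2 + ((s1 * s2 - s0 * s3)/D) * s1 + ((s1 * s3 - s2^2)/D) * s0 = (s2*D + (s1 * s2 - s0 * s3) * s1 + (s1 * s3 - s2^2) * s0)/D"
    using assms(1) by (simp add: field_simps)
  also have "s2*D + (s1 * s2 - s0 * s3) * s1 + (s1 * s3 - s2^2) * s0 = 0" unfolding assms(2) by (simp add: power2_eq_square algebra_simps)
  finally show ?thesis by simp
qed

lemma alg2: fixes s0 s1 s2 s3 D :: real
  assumes "D \<noteq> 0" "D = s0 * s2 - s1^2"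
  shows "s3 + ((s1 * s2 - s0 * s3)/D) * s2 + ((s1 * s3 - s2^2)/D) * s1 = 0"
proof -
  have "s3 + ((s1 * s2 - s0 * s3)/D) * s2 + ((s1 * s3 - s2^2)/D) * s1 = (s3*D + (s1 * s2 - s0 * s3) * s2 + (s1 * s3 - s2^2) * s1)/D"
    using assms(1) by (simp add: field_simps)
  also have "s3*D + (s1 * s2 - s0 * s3) * s2 + (s1 * s3 - s2^2) * s1 = 0" unfolding assms(2) by (simp add: power2_eq_square algebra_simps)
  finally show ?thesis by simp
qed

lemma a0: "a 0 = 1" by (simp add: a_def ffact_def)

context
  fixes x :: real and z :: nat
  assumes xpos: "0 < x" and xz: "x < f z"
begin

lemma sumsS: "(\<lambda>n. real n ^ k * a n * x ^ n) sums S k x"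
  unfolding S_def by (rule summable_sums, rule summk) (use xpos xz in auto)

lemma summS: "summable (\<lambda>n. real n ^ k * a n * x ^ n)"
  using sumsS by (rule sums_summable)

lemma S0_ge1: "S 0 x \<ge> 1"
proof -
  have "sum (\<lambda>n. real n ^ 0 * a n * x ^ n) {0} \<le> S 0 x"
    unfolding S_def by (rule sum_le_suminf[OF summS]) (use a_pos xpos in \<open>auto intro!: mult_nonneg_nonneg less_imp_le\<close>)
  thus ?thesis by (simp add: a0)
qed

lemma S_pos: "S k x > 0"
proof -
  have p1: "0 < real 1 ^ k * a 1 * x ^ 1" using a_pos xpos by simp
  have nn: "\<And>n. 0 \<le> real n ^ k * a n * x ^ n" using xpos by (intro mult_nonneg_nonneg) (auto simp: less_imp_le[OF a_pos])
  show ?thesis unfolding S_def by (rule suminf_pos2[OF summS nn p1])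
qed

lemma Dd_pos: "Dd x > 0"
proof -
  define m where "m = S 1 x / S 0 x"
  have S0p: "S 0 x > 0" using S_pos by blast
  have mpos: "m > 0" using S_pos[of 1] S0p by (simp add: m_def)
  have "(\<lambda>n. real n ^ 2 * a n * x ^ n + (- 2 * m) * (real n ^ 1 * a n * x ^ n) + m^2 * (real n ^ 0 * a n * x ^ n))
        sums (S 2 x + (- 2 * m) * S 1 x + m^2 * S 0 x)"
    by (intro sums_add sums_mult sumsS)
  moreover have "(\<lambda>n. real n ^ 2 * a n * x ^ n + (- 2 * m) * (real n ^ 1 * a n * x ^ n) + m^2 * (real n ^ 0 * a n * x ^ n))
      = (\<lambda>n. a n * x ^ n * (real n - m)^2)"
    by (rule ext) (simp add: power2_eq_square algebra_simps)
  ultimately have sv: "(\<lambda>n. a n * x ^ n * (real n - m)^2) sums (S 2 x + (- 2 * m) * S 1 x + m^2 * S 0 x)" by simp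
  have "0 < (\<Sum>n. a n * x ^ n * (real n - m)^2)"
  proof -
    have p1: "0 < a 0 * x ^ 0 * (real 0 - m)^2" using mpos by (simp add: a0)
    have nn: "\<And>n. 0 \<le> a n * x ^ n * (real n - m)^2" using xpos by (intro mult_nonneg_nonneg) (auto simp: less_imp_le[OF a_pos])
    show ?thesis by (rule suminf_pos2[OF sums_summable[OF sv] nn p1])
  qed
  hence "0 < S 2 x + (- 2 * m) * S 1 x + m^2 * S 0 x" using sums_unique[OF sv] by simp
  hence "0 < S 0 x * (S 2 x + (- 2 * m) * S 1 x + m^2 * S 0 x)" using S0p by simp
  also have "S 0 x * (S 2 x + (- 2 * m) * S 1 x + m^2 * S 0 x) = Dd x"
    using S0p by (simp add: m_def Dd_def power2_eq_square field_simps)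
  finally show ?thesis .
qed

lemma stein_sums:
  assumes "summable G" "G = (\<lambda>w. h (Suc w) * a w * x ^ w)"
  shows "(\<lambda>n. f n * h n * a n * x ^ n) sums (x * suminf G)"
proof -
  have "(\<lambda>n. x * G n) sums (x * suminf G)" by (intro sums_mult summable_sums assms(1))
  moreover have "(\<lambda>n. x * G n) = (\<lambda>n. f (Suc n) * h (Suc n) * a (Suc n) * x ^ Suc n)"
    using fa_Suc by (auto simp: assms(2) fun_eq_iff algebra_simps)
  ultimately have "(\<lambda>n. f (Suc n) * h (Suc n) * a (Suc n) * x ^ Suc n) sums (x * suminf G)" by simp
  thus ?thesis by (subst (asm) sums_Suc_iff) (simp add: f0)
qed

lemma F0_sums: "(\<lambda>n. f n * 1 * a n * x ^ n) sums (x * S 0 x)"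
proof -
  have "(\<lambda>n. f n * 1 * a n * x ^ n) sums (x * suminf (\<lambda>w. 1 * a w * x ^ w))"
    by (rule stein_sums) (use summS[of 0] in auto)
  thus ?thesis by (simp add: S_def)
qed

lemma F1_sums: "(\<lambda>n. f n * real n * a n * x ^ n) sums (x * (S 1 x + S 0 x))"
proof -
  have sG: "(\<lambda>w. real w ^ 1 * a w * x ^ w + real w ^ 0 * a w * x ^ w) sums (S 1 x + S 0 x)"
    by (intro sums_add sumsS)
  have "(\<lambda>n. f n * real n * a n * x ^ n) sums (x * suminf (\<lambda>w. real w ^ 1 * a w * x ^ w + real w ^ 0 * a w * x ^ w))"
    by (rule stein_sums[OF sums_summable[OF sG]]) (simp add: fun_eq_iff algebra_simps)
  thus ?thesis using sums_unique[OF sG] by simp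
qed

lemma F2_sums: "(\<lambda>n. f n * real n ^ 2 * a n * x ^ n) sums (x * (S 2 x + 2 * S 1 x + S 0 x))"
proof -
  have sG: "(\<lambda>w. real w ^ 2 * a w * x ^ w + 2 * (real w ^ 1 * a w * x ^ w) + real w ^ 0 * a w * x ^ w) sums (S 2 x + 2 * S 1 x + S 0 x)"
    by (intro sums_add sums_mult sumsS)
  have "(\<lambda>n. f n * real n ^ 2 * a n * x ^ n) sums (x * suminf (\<lambda>w. real w ^ 2 * a w * x ^ w + 2 * (real w ^ 1 * a w * x ^ w) + real w ^ 0 * a w * x ^ w))"
    by (rule stein_sums[OF sums_summable[OF sG]]) (simp add: fun_eq_iff power2_eq_square algebra_simps)
  thus ?thesis using sums_unique[OF sG] by simp
qed

lemma pq_sums: "(\<lambda>n. (a n * x ^ n) * (real n ^ 2 + bb x * real n + cc x)) sums 0"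
proof -
  have "(\<lambda>n. real n ^ 2 * a n * x ^ n + bb x * (real n ^ 1 * a n * x ^ n) + cc x * (real n ^ 0 * a n * x ^ n))
        sums (S 2 x + bb x * S 1 x + cc x * S 0 x)"
    by (intro sums_add sums_mult sumsS)
  moreover have "S 2 x + bb x * S 1 x + cc x * S 0 x = 0"
    unfolding bb_def cc_def by (rule alg1) (use Dd_pos in \<open>auto simp: Dd_def\<close>)
  moreover have "(\<lambda>n. real n ^ 2 * a n * x ^ n + bb x * (real n ^ 1 * a n * x ^ n) + cc x * (real n ^ 0 * a n * x ^ n))
     = (\<lambda>n. (a n * x ^ n) * (real n ^ 2 + bb x * real n + cc x))"
    by (rule ext) (simp add: algebra_simps)
  ultimately show ?thesis by simp
qed

lemma pnq_sums: "(\<lambda>n. (a n * x ^ n) * real n * (real n ^ 2 + bb x * real n + cc x)) sums 0"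
proof -
  have "(\<lambda>n. real n ^ 3 * a n * x ^ n + bb x * (real n ^ 2 * a n * x ^ n) + cc x * (real n ^ 1 * a n * x ^ n))
        sums (S 3 x + bb x * S 2 x + cc x * S 1 x)"
    by (intro sums_add sums_mult sumsS)
  moreover have "S 3 x + bb x * S 2 x + cc x * S 1 x = 0"
    unfolding bb_def cc_def by (rule alg2) (use Dd_pos in \<open>auto simp: Dd_def\<close>)
  moreover have "(\<lambda>n. real n ^ 3 * a n * x ^ n + bb x * (real n ^ 2 * a n * x ^ n) + cc x * (real n ^ 1 * a n * x ^ n))
     = (\<lambda>n. (a n * x ^ n) * real n * (real n ^ 2 + bb x * real n + cc x))"
    by (rule ext) (simp add: power2_eq_square power3_eq_cube algebra_simps)
  ultimately show ?thesis by simp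
qed

lemma pfq_sums: "(\<lambda>n. (a n * x ^ n) * f n * (real n ^ 2 + bb x * real n + cc x)) sums TT x"
proof -
  have "(\<lambda>n. f n * real n ^ 2 * a n * x ^ n + bb x * (f n * real n * a n * x ^ n) + cc x * (f n * 1 * a n * x ^ n))
        sums (x * (S 2 x + 2 * S 1 x + S 0 x) + bb x * (x * (S 1 x + S 0 x)) + cc x * (x * S 0 x))"
    by (intro sums_add sums_mult F0_sums F1_sums F2_sums)
  moreover have "x * (S 2 x + 2 * S 1 x + S 0 x) + bb x * (x * (S 1 x + S 0 x)) + cc x * (x * S 0 x)
      = x * (S 2 x + bb x * S 1 x + cc x * S 0 x) + TT x"
    by (simp add: TT_def algebra_simps)
  moreover have "S 2 x + bb x * S 1 x + cc x * S 0 x = 0"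
    unfolding bb_def cc_def by (rule alg1) (use Dd_pos in \<open>auto simp: Dd_def\<close>)
  moreover have "(\<lambda>n. f n * real n ^ 2 * a n * x ^ n + bb x * (f n * real n * a n * x ^ n) + cc x * (f n * 1 * a n * x ^ n))
     = (\<lambda>n. (a n * x ^ n) * f n * (real n ^ 2 + bb x * real n + cc x))"
    by (rule ext) (simp add: algebra_simps)
  ultimately show ?thesis by simp
qed

end
end

context zrp begin

lemma TT_cvx:
  assumes "cvx h" "h = f \<or> h = (\<lambda>n. - f n)" "0 < x" "x < f z"
  shows "(\<Sum>n. (a n * x ^ n) * h n * (real n ^ 2 + bb x * real n + cc x)) \<ge> 0 \<and>
         ((\<Sum>n. (a n * x ^ n) * h n * (real n ^ 2 + bb x * real n + cc x)) = 0 \<longrightarrow> (\<exists>\<alpha> \<beta>. \<forall>n. h n = \<alpha> + \<beta> * real n))"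
proof (rule sign_lemma[OF assms(1)])
  show "\<And>n. a n * x ^ n > 0" using a_pos assms by simp
  show "summable (\<lambda>n. a n * x ^ n * (real n ^ 2 + bb x * real n + cc x))"
    using pq_sums[OF assms(3,4)] by (rule sums_summable)
  show "summable (\<lambda>n. a n * x ^ n * real n * (real n ^ 2 + bb x * real n + cc x))"
    using pnq_sums[OF assms(3,4)] by (rule sums_summable)
  show "(\<Sum>n. a n * x ^ n * (real n ^ 2 + bb x * real n + cc x)) = 0"
    using pq_sums[OF assms(3,4)] by (rule sums_unique[symmetric])
  show "(\<Sum>n. a n * x ^ n * real n * (real n ^ 2 + bb x * real n + cc x)) = 0"
    using pnq_sums[OF assms(3,4)] by (rule sums_unique[symmetric])
  have s: "summable (\<lambda>n. a n * x ^ n * f n * (real n ^ 2 + bb x * real n + cc x))"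
    using pfq_sums[OF assms(3,4)] by (rule sums_summable)
  show "summable (\<lambda>n. a n * x ^ n * h n * (real n ^ 2 + bb x * real n + cc x))"
    using assms(2)
  proof
    assume "h = f" thus ?thesis using s by simp
  next
    assume "h = (\<lambda>n. - f n)"
    thus ?thesis using summable_minus[OF s] by simp
  qed
qed

lemma TT_convex:
  assumes "cvx f" "0 < x" "x < f z"
  shows "TT x \<ge> 0 \<and> (TT x = 0 \<longrightarrow> (\<exists>\<alpha> \<beta>. \<forall>n. f n = \<alpha> + \<beta> * real n))"
  using TT_cvx[OF assms(1) _ assms(2,3)] sums_unique[OF pfq_sums[OF assms(2,3)]] by simp

lemma TT_concave:
  assumes "cvx (\<lambda>n. - f n)" "0 < x" "x < f z"
  shows "TT x \<le> 0 \<and> (TT x = 0 \<longrightarrow> (\<exists>\<alpha> \<beta>. \<forall>n. f n = \<alpha> + \<beta> * real n))"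
proof -
  have e: "(\<Sum>n. (a n * x ^ n) * (- f n) * (real n ^ 2 + bb x * real n + cc x)) = - TT x"
    using sums_unique[OF sums_minus[OF pfq_sums[OF assms(2,3)]]] by simp
  have "- TT x \<ge> 0 \<and> (- TT x = 0 \<longrightarrow> (\<exists>\<alpha> \<beta>. \<forall>n. - f n = \<alpha> + \<beta> * real n))"
    using TT_cvx[OF assms(1) _ assms(2,3)] unfolding e by simp
  moreover have "(\<exists>\<alpha> \<beta>. \<forall>n. - f n = \<alpha> + \<beta> * real n) \<Longrightarrow> (\<exists>\<alpha> \<beta>. \<forall>n. f n = \<alpha> + \<beta> * real n)"
  proof -
    assume "\<exists>\<alpha> \<beta>. \<forall>n. - f n = \<alpha> + \<beta> * real n"
    then obtain \<alpha> \<beta> where "\<forall>n. - f n = \<alpha> + \<beta> * real n" by blast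
    hence "\<forall>n. f n = (-\<alpha>) + (-\<beta>) * real n" unfolding mult_minus_left
      by (metis add.inverse_inverse minus_add_distrib)
    thus ?thesis by blast
  qed
  ultimately show ?thesis by auto
qed

lemma TT_linear:
  assumes "\<forall>n. f n = \<alpha> + \<beta> * real n" "0 < x" "x < f z"
  shows "TT x = 0"
proof -
  have "cvx f" using assms(1) unfolding cvx_def by (simp add: algebra_simps)
  moreover have "cvx (\<lambda>n. - f n)" using assms(1) unfolding cvx_def by (simp add: algebra_simps)
  ultimately show ?thesis using TT_convex[OF _ assms(2,3)] TT_concave[OF _ assms(2,3)] by force
qed

definition m :: "real \<Rightarrow> real" where "m x = S 1 x / S 0 x"
definition G :: "real \<Rightarrow> real" where "G x = x * (S 0 x)^2 / Dd x"
definition NN :: "real \<Rightarrow> real" where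
  "NN x = Dd x * ((S 0 x)^2 + 2 * S 0 x * S 1 x) - (S 0 x)^2 * (S 3 x * S 0 x - S 1 x * S 2 x)"

context
  fixes x :: real and z :: nat
  assumes xpos: "0 < x" and xz: "x < f z"
begin

lemma DS0: "DERIV (S 0) x :> S 1 x / x" using DERIV_S[OF xpos xz, of 0] by simp
lemma DS1: "DERIV (S 1) x :> S 2 x / x" using DERIV_S[OF xpos xz, of 1] by (simp add: numeral_2_eq_2)
lemma DS2: "DERIV (S 2) x :> S 3 x / x" using DERIV_S[OF xpos xz, of 2] by (simp add: numeral_3_eq_3 numeral_2_eq_2)

lemma NN_TT: "NN x = S 0 x * Dd x * TT x / x"
proof -
  have D0: "Dd x \<noteq> 0" using Dd_pos[OF xpos xz] by simp
  have "S 0 x * Dd x * TT x / x = S 0 x * Dd x * (2 * S 1 x + S 0 x) + S 0 x * (Dd x * bb x) * S 0 x"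
    using xpos by (simp add: TT_def field_simps)
  also have "Dd x * bb x = S 1 x * S 2 x - S 0 x * S 3 x" using D0 by (simp add: bb_def)
  finally show ?thesis by (simp add: NN_def power2_eq_square algebra_simps)
qed

lemma DERIV_m: "DERIV m x :> Dd x / (x * (S 0 x)^2)"
proof -
  have S0: "S 0 x \<noteq> 0" using S_pos[OF xpos xz] by (metis less_irrefl)
  have "DERIV (\<lambda>x. S 1 x / S 0 x) x :> (S 2 x / x * S 0 x - S 1 x * (S 1 x / x)) / (S 0 x * S 0 x)"
    by (rule DERIV_divide[OF DS1 DS0 S0])
  moreover have "(S 2 x / x * S 0 x - S 1 x * (S 1 x / x)) / (S 0 x * S 0 x) = Dd x / (x * (S 0 x)^2)"
    using xpos S0 by (simp add: Dd_def power2_eq_square field_simps)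
  ultimately show ?thesis unfolding m_def[abs_def] by simp
qed

lemma DERIV_Dd: "DERIV Dd x :> (S 0 x * S 3 x - S 1 x * S 2 x) / x"
proof -
  have "DERIV (\<lambda>x. S 0 x * S 2 x - S 1 x ^ 2) x :>
     (S 1 x / x * S 2 x + S 3 x / x * S 0 x) - of_nat 2 * (S 2 x / x * S 1 x ^ (2 - Suc 0))"
    by (intro DERIV_diff DERIV_mult DERIV_power DS0 DS1 DS2)
  moreover have "(S 1 x / x * S 2 x + S 3 x / x * S 0 x) - of_nat 2 * (S 2 x / x * S 1 x ^ (2 - Suc 0))
     = (S 0 x * S 3 x - S 1 x * S 2 x) / x"
    using xpos by (simp add: field_simps)
  ultimately show ?thesis unfolding Dd_def[abs_def] by simp
qed

lemma DERIV_G: "DERIV G x :> NN x / (Dd x)^2"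
proof -
  have D0: "Dd x \<noteq> 0" using Dd_pos[OF xpos xz] by simp
  have "DERIV (\<lambda>x. x * S 0 x ^ 2 / Dd x) x :>
      ((1 * S 0 x ^ 2 + of_nat 2 * (S 1 x / x * S 0 x ^ (2 - Suc 0)) * x) * Dd x
        - x * S 0 x ^ 2 * ((S 0 x * S 3 x - S 1 x * S 2 x) / x)) / (Dd x * Dd x)"
    by (intro DERIV_divide DERIV_mult DERIV_power DERIV_ident DS0 DERIV_Dd D0)
  moreover have "((1 * S 0 x ^ 2 + of_nat 2 * (S 1 x / x * S 0 x ^ (2 - Suc 0)) * x) * Dd x
        - x * S 0 x ^ 2 * ((S 0 x * S 3 x - S 1 x * S 2 x) / x)) / (Dd x * Dd x) = NN x / (Dd x)^2"
    using xpos D0 by (simp add: NN_def power2_eq_square field_simps)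
  ultimately show ?thesis unfolding G_def[abs_def] by simp
qed

lemma G_pos: "G x > 0"
  using xpos S_pos[OF xpos xz, of 0] Dd_pos[OF xpos xz] by (simp add: G_def)

lemma m_pos: "m x > 0"
  using S_pos[OF xpos xz, of 0] S_pos[OF xpos xz, of 1] by (simp add: m_def)

lemma m'_pos: "Dd x / (x * (S 0 x)^2) > 0"
  using xpos S_pos[OF xpos xz, of 0] Dd_pos[OF xpos xz] by simp

lemma G_inv: "G x = inverse (Dd x / (x * (S 0 x)^2))"
  by (simp add: G_def)

end
end

context zrp begin

definition Dom :: "real \<Rightarrow> bool" where "Dom x \<longleftrightarrow> 0 < x \<and> (\<exists>z. x < f z)"

lemma Dom_le: "Dom y \<Longrightarrow> 0 < x \<Longrightarrow> x \<le> y \<Longrightarrow> Dom x"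
  unfolding Dom_def by (auto intro: le_less_trans)

lemma m_strict:
  assumes "Dom x" "Dom y" "x < y" shows "m x < m y"
proof -
  obtain z where z: "y < f z" using assms(2) Dom_def by blast
  show ?thesis
  proof (rule DERIV_pos_imp_increasing[OF assms(3)])
    fix t assume t: "x \<le> t" "t \<le> y"
    have tp: "0 < t" using assms(1) t Dom_def by auto
    have tz: "t < f z" using t z by simp
    show "\<exists>d. DERIV m t :> d \<and> d > 0" using DERIV_m[OF tp tz] m'_pos[OF tp tz] by blast
  qed
qed

lemma m_mono_iff: "Dom x \<Longrightarrow> Dom y \<Longrightarrow> m x < m y \<longleftrightarrow> x < y"
  using m_strict by (metis linorder_neqE_linordered_idom order_less_asym)

lemma m_inj: "Dom x \<Longrightarrow> Dom y \<Longrightarrow> m x = m y \<Longrightarrow> x = y"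
  using m_strict by (metis linorder_neqE_linordered_idom order_less_irrefl)

lemma m_cont: "Dom x \<Longrightarrow> isCont m x"
  unfolding Dom_def using DERIV_m DERIV_isCont by blast

lemma S1_small:
  assumes "0 < x" "x \<le> x0" "x0 < f z"
  shows "S 1 x \<le> x / x0 * S 1 x0"
proof -
  have x0: "0 < x0" using assms by simp
  have le: "real n ^ 1 * a n * x ^ n \<le> x / x0 * (real n ^ 1 * a n * x0 ^ n)" for n
  proof (cases n)
    case 0 then show ?thesis by simp
  next
    case (Suc k)
    have "x ^ k \<le> x0 ^ k" using assms by (intro power_mono) auto
    hence "x * (real n * a n * x ^ k) \<le> x * (real n * a n * x0 ^ k)"
      using a_pos[of n] assms by (intro mult_left_mono) auto
    moreover have "real n ^ 1 * a n * x ^ n = x * (real n * a n * x ^ k)" using Suc by simp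
    moreover have "x / x0 * (real n ^ 1 * a n * x0 ^ n) = x * (real n * a n * x0 ^ k)" using Suc x0 by (simp add: field_simps)
    ultimately show ?thesis by (metis (no_types, lifting))
  qed
  have "S 1 x \<le> (\<Sum>n. x / x0 * (real n ^ 1 * a n * x0 ^ n))"
    unfolding S_def by (rule suminf_le[OF le summS[OF assms(1), of z] summable_mult[OF summS[OF x0 assms(3)]]])
      (use assms in auto)
  also have "\<dots> = x / x0 * S 1 x0" unfolding S_def by (rule suminf_mult[OF summS[OF x0 assms(3)]])
  finally show ?thesis .
qed

lemma m_le_S1: "0 < x \<Longrightarrow> x < f z \<Longrightarrow> m x \<le> S 1 x"
  using S0_ge1[of x z] S_pos[of x z 1] unfolding m_def
  by (simp add: divide_le_eq mult_le_cancel_left1)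

lemma exists_low:
  assumes "\<rho> > 0" shows "\<exists>x. Dom x \<and> m x < \<rho>"
proof -
  define x0 where "x0 = f 1 / 2"
  have f1: "f 1 > 0" using fpos by simp
  have x0p: "0 < x0" "x0 < f 1" using f1 by (auto simp: x0_def)
  have S1p: "S 1 x0 > 0" using S_pos[OF x0p] .
  define x where "x = min x0 (\<rho> * x0 / (2 * S 1 x0))"
  have xp: "0 < x" using x0p S1p assms by (simp add: x_def)
  have xx0: "x \<le> x0" by (simp add: x_def)
  have "m x \<le> S 1 x" using m_le_S1[of x 1] xp xx0 x0p by simp
  also have "\<dots> \<le> x / x0 * S 1 x0" using S1_small[OF xp xx0 x0p(2)] .
  also have "\<dots> \<le> (\<rho> * x0 / (2 * S 1 x0)) / x0 * S 1 x0"
    using x0p S1p by (intro mult_right_mono divide_right_mono) (auto simp: x_def)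
  also have "\<dots> = \<rho> / 2" using x0p S1p by (simp add: field_simps)
  finally have "m x < \<rho>" using assms by simp
  moreover have "Dom x" unfolding Dom_def using xp xx0 x0p by (intro conjI exI[of _ 1]) auto
  ultimately show ?thesis by blast
qed

lemma S1_ge:
  assumes "0 < x" "x < f z"
  shows "real N * (S 0 x - (\<Sum>n<N. a n * x ^ n)) \<le> S 1 x"
proof -
  have s1: "(\<lambda>n. real N * (real n ^ 0 * a n * x ^ n) - real N * (if n \<in> {..<N} then a n * x ^ n else 0))
      sums (real N * S 0 x - real N * (\<Sum>n\<in>{..<N}. a n * x ^ n))"
    by (intro sums_diff sums_mult sumsS[OF assms] sums_If_finite_set) auto
  have le: "real N * (real n ^ 0 * a n * x ^ n) - real N * (if n \<in> {..<N} then a n * x ^ n else 0)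
      \<le> real n ^ 1 * a n * x ^ n" for n
  proof (cases "n < N")
    case True thus ?thesis using a_pos[of n] assms by simp
  next
    case False
    hence "real N * (a n * x ^ n) \<le> real n * (a n * x ^ n)"
      using a_pos[of n] assms by (intro mult_right_mono) auto
    thus ?thesis using False by simp
  qed
  have "real N * S 0 x - real N * (\<Sum>n\<in>{..<N}. a n * x ^ n) \<le> S 1 x"
    using sums_le[OF le s1 sumsS[OF assms, of 1]] .
  thus ?thesis by (simp add: algebra_simps)
qed

lemma m_ge_half:
  assumes "0 < x" "x < f z" "2 * (\<Sum>n<N. a n * x ^ n) \<le> S 0 x"
  shows "real N / 2 \<le> m x"
proof -
  have S0: "S 0 x > 0" using S_pos[OF assms(1,2)] .
  have "real N * (S 0 x / 2) \<le> real N * (S 0 x - (\<Sum>n<N. a n * x ^ n))"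
    using assms(3) by (intro mult_left_mono) auto
  also have "\<dots> \<le> S 1 x" by (rule S1_ge[OF assms(1,2)])
  finally show ?thesis using S0 by (simp add: m_def field_simps)
qed

end

context zrp begin

lemma exists_high_unbdd:
  assumes unb: "\<And>M. \<exists>z. M < f z" and "\<rho> > 0"
  shows "\<exists>x. Dom x \<and> m x > \<rho>"
proof -
  define N where "N = nat \<lceil>2 * \<rho>\<rceil> + 1"
  have NR: "real N / 2 > \<rho>" using real_nat_ceiling_ge[of "2 * \<rho>"] unfolding N_def by simp
  have N1: "N \<ge> 1" by (simp add: N_def)
  define C where "C = (\<Sum>n<N. a n)"
  have C0: "C \<ge> 0" unfolding C_def by (intro sum_nonneg) (simp add: less_imp_le[OF a_pos])
  define x where "x = 1 + 2 * C / a N"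
  have x1: "x \<ge> 1" using C0 a_pos[of N] by (simp add: x_def)
  obtain z where z: "x < f z" using unb by blast
  have xp: "0 < x" using x1 by simp
  have "(\<Sum>n<N. a n * x ^ n) \<le> (\<Sum>n<N. a n * x ^ (N - 1))"
    by (intro sum_mono mult_left_mono power_increasing) (use x1 a_pos in \<open>auto simp: less_imp_le\<close>)
  also have "\<dots> = C * x ^ (N - 1)" by (simp add: C_def sum_distrib_right)
  finally have P: "(\<Sum>n<N. a n * x ^ n) \<le> C * x ^ (N - 1)" .
  have "sum (\<lambda>n. real n ^ 0 * a n * x ^ n) {N} \<le> S 0 x"
    unfolding S_def by (rule sum_le_suminf[OF summS[OF xp z]]) (use a_pos xp in \<open>auto intro!: mult_nonneg_nonneg simp: less_imp_le\<close>)
  hence S0: "a N * x ^ N \<le> S 0 x" by simp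
  have "2 * C \<le> a N * x" using a_pos[of N] C0 by (simp add: x_def field_simps)
  hence "2 * C * x ^ (N - 1) \<le> a N * x * x ^ (N - 1)" using xp by (intro mult_right_mono) auto
  also have "a N * x * x ^ (N - 1) = a N * x ^ N" using N1 by (simp add: power_eq_if)
  finally have "2 * (\<Sum>n<N. a n * x ^ n) \<le> S 0 x" using P S0 by linarith
  hence "real N / 2 \<le> m x" by (rule m_ge_half[OF xp z])
  moreover have "Dom x" using xp z Dom_def by blast
  ultimately show ?thesis using NR by force
qed

lemma exists_high_bdd:
  assumes bdd: "\<And>z. f z \<le> M" and "\<rho> > 0"
  shows "\<exists>x. Dom x \<and> m x > \<rho>"
proof -
  define L where "L = Sup (range f)"
  have bA: "bdd_above (range f)" using bdd by (auto intro!: bdd_aboveI[of _ M])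
  have fL: "f z \<le> L" for z unfolding L_def by (rule cSup_upper[OF _ bA]) simp
  have Lp: "L > 0" using fL[of 1] fpos[of 1] by simp
  have DomL: "Dom x" if "0 < x" "x < L" for x
  proof -
    have "\<exists>y\<in>range f. x < y" using that less_cSup_iff[OF _ bA] unfolding L_def by blast
    thus ?thesis using that Dom_def by auto
  qed
  have aL: "a n * L ^ n \<ge> 1" for n
  proof -
    have "ffact f n \<le> (\<Prod>y\<in>{1..n}. L)" unfolding ffact_def
      by (rule prod_mono) (use fL f_nonneg in auto)
    hence "ffact f n \<le> L ^ n" by simp
    thus ?thesis using ffact_pos[of n] by (simp add: a_def field_simps)
  qed
  define N where "N = nat \<lceil>2 * \<rho>\<rceil> + 1"
  have NR: "real N / 2 > \<rho>" using real_nat_ceiling_ge[of "2 * \<rho>"] unfolding N_def by simp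
  define PL where "PL = (\<Sum>n<N. a n * L ^ n)"
  define K where "K = nat \<lceil>4 * PL\<rceil> + 1"
  have K1: "K \<ge> 1" by (simp add: K_def)
  have KP: "real K \<ge> 4 * PL" using real_nat_ceiling_ge[of "4 * PL"] unfolding K_def by simp
  define t where "t = 1 - 1 / (2 * real K)"
  have t12: "t \<ge> 1/2" "t < 1" using K1 by (auto simp: t_def field_simps)
  define x where "x = L * t"
  have xp: "0 < x" and xL: "x < L" using Lp t12 by (auto simp: x_def)
  have dx: "Dom x" by (rule DomL[OF xp xL])
  then obtain z where z: "x < f z" using Dom_def by blast
  have P: "(\<Sum>n<N. a n * x ^ n) \<le> PL"
    unfolding PL_def by (intro sum_mono mult_left_mono power_mono) (use xp xL a_pos in \<open>auto simp: less_imp_le\<close>)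
  have tn: "t ^ n \<ge> 1/2" if "n < K" for n
  proof -
    have "1 + real n * (- 1 / (2 * real K)) \<le> (1 + (- 1 / (2 * real K))) ^ n"
      by (rule Bernoulli_inequality) (use K1 in \<open>simp add: field_simps\<close>)
    moreover have "real n * (1 / (2 * real K)) \<le> 1/2" using that K1 by (simp add: field_simps)
    ultimately show ?thesis by (simp add: t_def)
  qed
  have trm: "a n * x ^ n \<ge> 1/2" if "n < K" for n
  proof -
    have "a n * x ^ n = (a n * L ^ n) * t ^ n" by (simp add: x_def power_mult_distrib)
    also have "\<dots> \<ge> 1 * (1/2)" using aL[of n] tn[OF that] by (intro mult_mono) auto
    finally show ?thesis by simp
  qed
  have "real K / 2 = (\<Sum>n<K. 1/2::real)" by simp
  also have "\<dots> \<le> (\<Sum>n<K. a n * x ^ n)" by (intro sum_mono trm) auto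
  also have "\<dots> = (\<Sum>n<K. real n ^ 0 * a n * x ^ n)" by simp
  also have "\<dots> \<le> S 0 x"
    unfolding S_def by (rule sum_le_suminf[OF summS[OF xp z]]) (use a_pos xp in \<open>auto intro!: mult_nonneg_nonneg simp: less_imp_le\<close>)
  finally have "2 * (\<Sum>n<N. a n * x ^ n) \<le> S 0 x" using P KP by linarith
  hence "real N / 2 \<le> m x" by (rule m_ge_half[OF xp z])
  thus ?thesis using dx NR by force
qed

lemma exists_high: assumes "\<rho> > 0" shows "\<exists>x. Dom x \<and> m x > \<rho>"
proof (cases "\<exists>M. \<forall>z. f z \<le> M")
  case True then obtain M where "\<And>z. f z \<le> M" by blast
  thus ?thesis using exists_high_bdd assms by blast
next
  case False
  hence "\<And>M. \<exists>z. M < f z" by (meson not_le)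
  thus ?thesis using exists_high_unbdd assms by blast
qed

lemma exists_eq:
  assumes "\<rho> > 0" shows "\<exists>x. Dom x \<and> m x = \<rho>"
proof -
  obtain x1 where x1: "Dom x1" "m x1 < \<rho>" using exists_low[OF assms] by blast
  obtain x2 where x2: "Dom x2" "m x2 > \<rho>" using exists_high[OF assms] by blast
  have x12: "x1 \<le> x2"
  proof (rule ccontr)
    assume "\<not> x1 \<le> x2" hence "x2 < x1" by simp
    from m_strict[OF x2(1) x1(1) this] x1(2) x2(2) show False by simp
  qed
  have "\<exists>x. x1 \<le> x \<and> x \<le> x2 \<and> m x = \<rho>"
  proof (rule IVT')
    show "m x1 \<le> \<rho>" "\<rho> \<le> m x2" "x1 \<le> x2" using x1 x2 x12 by auto
    have x1p: "0 < x1" using x1(1) Dom_def by simp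
    show "continuous_on {x1..x2} m"
    proof (intro continuous_at_imp_continuous_on ballI m_cont)
      fix t assume "t \<in> {x1..x2}"
      thus "Dom t" using Dom_le[OF x2(1), of t] x1p by auto
    qed
  qed
  then obtain x where "x1 \<le> x" "x \<le> x2" "m x = \<rho>" by blast
  moreover have "Dom x" using Dom_le[OF x2(1)] x1(1) \<open>x1 \<le> x\<close> \<open>x \<le> x2\<close> Dom_def by auto
  ultimately show ?thesis by blast
qed

end

context zrp begin

lemma theta_bar_iff: "ereal \<theta> < theta_bar f \<longleftrightarrow> (\<exists>z. exp \<theta> < f z)"
proof -
  define e where "e = (\<lambda>z. ereal (ln (f z)))"
  have inc: "incseq (\<lambda>i. e (Suc i))"
    unfolding incseq_def e_def
  proof (intro allI impI)
    fix i j :: nat assume "i \<le> j"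
    hence "f (Suc i) \<le> f (Suc j)" using fmono by (simp add: monoD)
    thus "ereal (ln (f (Suc i))) \<le> ereal (ln (f (Suc j)))" using fpos[of "Suc i"] by simp
  qed
  have "e \<longlonglongrightarrow> (SUP i. e (Suc i))" by (rule LIMSEQ_imp_Suc[OF LIMSEQ_SUP[OF inc]])
  hence tb: "theta_bar f = (SUP i. e (Suc i))" unfolding theta_bar_def e_def[symmetric] by (rule limI)
  have "ereal \<theta> < theta_bar f \<longleftrightarrow> (\<exists>i. ereal \<theta> < e (Suc i))" unfolding tb by (simp add: less_SUP_iff)
  also have "\<dots> \<longleftrightarrow> (\<exists>i. exp \<theta> < f (Suc i))"
  proof -
    have "ereal \<theta> < e (Suc i) \<longleftrightarrow> exp \<theta> < f (Suc i)" for i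
    proof -
      have "exp \<theta> < f (Suc i) \<longleftrightarrow> exp \<theta> < exp (ln (f (Suc i)))" using fpos[of "Suc i"] by simp
      thus ?thesis by (simp add: e_def)
    qed
    thus ?thesis by simp
  qed
  also have "\<dots> \<longleftrightarrow> (\<exists>z. exp \<theta> < f z)"
  proof
    assume "\<exists>z. exp \<theta> < f z"
    then obtain z where z: "exp \<theta> < f z" by blast
    have "z \<noteq> 0" using z f0 by (metis exp_gt_zero less_asym)
    then obtain i where "z = Suc i" using not0_implies_Suc by blast
    thus "\<exists>i. exp \<theta> < f (Suc i)" using z by blast
  qed blast
  finally show ?thesis .
qed

lemma theta_bar_Dom: "ereal \<theta> < theta_bar f \<longleftrightarrow> Dom (exp \<theta>)"
  using theta_bar_iff by (simp add: Dom_def)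

lemma term_eq: "exp (\<theta> * real z) / ffact f z = real z ^ 0 * a z * exp \<theta> ^ z"
  by (simp add: a_def exp_of_nat_mult[symmetric] mult.commute)

lemma Zpart_eq: "Zpart f \<theta> = S 0 (exp \<theta>)"
  unfolding Zpart_def S_def term_eq ..

lemma mu_eq: "mu f \<theta> z = a z * exp \<theta> ^ z / S 0 (exp \<theta>)"
proof -
  have "mu f \<theta> z = exp (\<theta> * real z) / ffact f z / Zpart f \<theta>"
    by (simp add: mu_def divide_divide_eq_left mult.commute)
  thus ?thesis unfolding term_eq Zpart_eq by simp
qed

lemma rho_eq:
  assumes "Dom (exp \<theta>)" shows "rho f \<theta> = m (exp \<theta>)"
proof -
  obtain z where z: "exp \<theta> < f z" using assms Dom_def by blast
  have "rho f \<theta> = (\<Sum>n. (real n ^ 1 * a n * exp \<theta> ^ n) / S 0 (exp \<theta>))"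
    unfolding rho_def mu_eq by (simp add: algebra_simps)
  also have "\<dots> = S 1 (exp \<theta>) / S 0 (exp \<theta>)"
    unfolding S_def[of 1] by (rule suminf_divide[OF summS[OF exp_gt_zero z]])
  finally show ?thesis by (simp add: m_def)
qed

lemma fluxsum_eq:
  assumes "Dom (exp \<theta>)" shows "(\<Sum>z. f z * mu f \<theta> z) = exp \<theta>"
proof -
  obtain z where z: "exp \<theta> < f z" using assms Dom_def by blast
  have S0: "S 0 (exp \<theta>) > 0" using S_pos[OF exp_gt_zero z] .
  have s: "(\<lambda>n. f n * 1 * a n * exp \<theta> ^ n) sums (exp \<theta> * S 0 (exp \<theta>))"
    by (rule F0_sums[OF exp_gt_zero z])
  have "(\<Sum>z. f z * mu f \<theta> z) = (\<Sum>n. (f n * 1 * a n * exp \<theta> ^ n) / S 0 (exp \<theta>))"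
    unfolding mu_eq by (simp add: algebra_simps)
  also have "\<dots> = (\<Sum>n. f n * 1 * a n * exp \<theta> ^ n) / S 0 (exp \<theta>)"
    by (rule suminf_divide[OF sums_summable[OF s]])
  also have "\<dots> = exp \<theta>" using sums_unique[OF s, symmetric] S0 by simp
  finally show ?thesis .
qed

lemma theta_of_eq:
  assumes "Dom x" "m x = \<rho>" shows "theta_of f \<rho> = ln x"
  unfolding theta_of_def
proof (rule the_equality)
  have xp: "x > 0" using assms Dom_def by simp
  show "ereal (ln x) < theta_bar f \<and> rho f (ln x) = \<rho>"
    using assms xp by (simp add: theta_bar_Dom rho_eq)
next
  fix \<theta> assume th: "ereal \<theta> < theta_bar f \<and> rho f \<theta> = \<rho>"
  hence d: "Dom (exp \<theta>)" using theta_bar_Dom by simp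
  hence "m (exp \<theta>) = m x" using th rho_eq assms by simp
  hence "exp \<theta> = x" using m_inj[OF d assms(1)] by simp
  thus "\<theta> = ln x" by auto
qed

lemma flux_eq:
  assumes "Dom x" shows "flux f (m x) = x"
proof -
  have xp: "x > 0" using assms Dom_def by simp
  have "theta_of f (m x) = ln x" by (rule theta_of_eq[OF assms refl])
  thus ?thesis unfolding flux_def using fluxsum_eq[of "ln x"] assms xp by simp
qed

lemma flux_props:
  assumes "\<rho> > 0" shows "Dom (flux f \<rho>) \<and> m (flux f \<rho>) = \<rho>"
proof -
  obtain x where x: "Dom x" "m x = \<rho>" using exists_eq[OF assms] by blast
  thus ?thesis using flux_eq[OF x(1)] by simp
qed

end

context zrp begin

lemma flux_cont:
  assumes "\<rho> > 0" shows "isCont (flux f) \<rho>"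
proof -
  define x0 where "x0 = flux f \<rho>"
  have d0: "Dom x0" and mx0: "m x0 = \<rho>" using flux_props[OF assms] by (auto simp: x0_def)
  obtain z where z: "x0 < f z" "0 < x0" using d0 Dom_def by blast
  define d where "d = min x0 (f z - x0) / 2"
  have dp: "0 < d" using z by (simp add: d_def)
  have Dt: "Dom t" if "\<bar>t - x0\<bar> \<le> d" for t
  proof -
    have "t - x0 \<le> d" "x0 - t \<le> d" using that by (auto simp: abs_le_iff)
    moreover have "2 * d \<le> x0" "2 * d \<le> f z - x0" by (auto simp: d_def)
    ultimately have "0 < t \<and> t < f z" using z(1) z(2) by linarith
    thus ?thesis unfolding Dom_def by blast
  qed
  have "isCont (flux f) (m x0)"
    by (rule isCont_inverse_function[OF dp]) (use Dt flux_eq m_cont in auto)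
  thus ?thesis using mx0 by simp
qed

lemma flux_deriv:
  assumes "\<rho> > 0" shows "DERIV (flux f) \<rho> :> G (flux f \<rho>)"
proof -
  define x0 where "x0 = flux f \<rho>"
  have d0: "Dom x0" and mx0: "m x0 = \<rho>" using flux_props[OF assms] by (auto simp: x0_def)
  obtain z where z: "0 < x0" "x0 < f z" using d0 Dom_def by blast
  have "DERIV (flux f) \<rho> :> inverse (Dd x0 / (x0 * (S 0 x0)^2))"
  proof (rule DERIV_inverse_function[where a = 0 and b = "\<rho> + 1"])
    show "DERIV m (flux f \<rho>) :> Dd x0 / (x0 * (S 0 x0)^2)" using DERIV_m[OF z] by (simp add: x0_def)
    show "Dd x0 / (x0 * (S 0 x0)^2) \<noteq> 0" using m'_pos[OF z] by (metis order_less_irrefl)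
    show "0 < \<rho>" "\<rho> < \<rho> + 1" using assms by auto
    show "\<And>y. 0 < y \<Longrightarrow> y < \<rho> + 1 \<Longrightarrow> m (flux f y) = y" using flux_props by blast
    show "isCont (flux f) \<rho>" by (rule flux_cont[OF assms])
  qed
  thus ?thesis using G_inv[OF z] by (simp add: x0_def)
qed

lemma F1_deriv:
  assumes "\<rho> > 0" shows "\<exists>c>0. DERIV (\<lambda>y. G (flux f y)) \<rho> :> c * TT (flux f \<rho>)"
proof -
  define x0 where "x0 = flux f \<rho>"
  have d0: "Dom x0" using flux_props[OF assms] by (auto simp: x0_def)
  obtain z where z: "0 < x0" "x0 < f z" using d0 Dom_def by blast
  have "DERIV (\<lambda>y. G (flux f y)) \<rho> :> NN x0 / (Dd x0)^2 * G x0"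
  proof -
    have dG: "DERIV G (flux f \<rho>) :> NN x0 / (Dd x0)^2" using DERIV_G[OF z] by (simp add: x0_def)
    show ?thesis using DERIV_chain2[OF dG flux_deriv[OF assms]] by (simp add: x0_def)
  qed
  moreover have "NN x0 / (Dd x0)^2 * G x0 = (S 0 x0 * Dd x0 / x0 / (Dd x0)^2 * G x0) * TT x0"
    unfolding NN_TT[OF z] by (simp add: field_simps)
  moreover have "S 0 x0 * Dd x0 / x0 / (Dd x0)^2 * G x0 > 0"
    using S_pos[OF z, of 0] Dd_pos[OF z] G_pos[OF z] z by simp
  ultimately show ?thesis unfolding x0_def by auto
qed

lemma dd_eq:
  assumes "\<rho> > 0" shows "\<exists>c>0. deriv (deriv (flux f)) \<rho> = c * TT (flux f \<rho>)"
proof -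
  obtain c where c: "c > 0" "DERIV (\<lambda>y. G (flux f y)) \<rho> :> c * TT (flux f \<rho>)" using F1_deriv[OF assms] by blast
  have ev: "eventually (\<lambda>y. deriv (flux f) y = G (flux f y)) (nhds \<rho>)"
    unfolding eventually_nhds
    by (intro exI[of _ "{0<..}"]) (use assms in \<open>auto intro: DERIV_imp_deriv flux_deriv\<close>)
  have "deriv (deriv (flux f)) \<rho> = deriv (\<lambda>y. G (flux f y)) \<rho>" by (rule deriv_cong_ev[OF ev refl])
  also have "\<dots> = c * TT (flux f \<rho>)" by (rule DERIV_imp_deriv[OF c(2)])
  finally show ?thesis using c(1) by blast
qed

lemma F1_mono:
  assumes "0 < x" "x \<le> y" "\<And>\<rho>. \<rho> > 0 \<Longrightarrow> TT (flux f \<rho>) \<ge> 0"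
  shows "G (flux f x) \<le> G (flux f y)"
proof (rule DERIV_nonneg_imp_nondecreasing[OF assms(2)])
  fix t assume t: "x \<le> t" "t \<le> y"
  hence tp: "t > 0" using assms by simp
  obtain c where c: "c > 0" "DERIV (\<lambda>y. G (flux f y)) t :> c * TT (flux f t)" using F1_deriv[OF tp] by blast
  thus "\<exists>d. DERIV (\<lambda>y. G (flux f y)) t :> d \<and> d \<ge> 0" using assms(3)[OF tp] by (intro exI[of _ "c * TT (flux f t)"]) auto
qed

lemma F1_anti:
  assumes "0 < x" "x \<le> y" "\<And>\<rho>. \<rho> > 0 \<Longrightarrow> TT (flux f \<rho>) \<le> 0"
  shows "- G (flux f x) \<le> - G (flux f y)"
proof (rule DERIV_nonneg_imp_nondecreasing[OF assms(2)])
  fix t assume t: "x \<le> t" "t \<le> y"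
  hence tp: "t > 0" using assms by simp
  obtain c where c: "c > 0" "DERIV (\<lambda>y. G (flux f y)) t :> c * TT (flux f t)" using F1_deriv[OF tp] by blast
  have "DERIV (\<lambda>y. - G (flux f y)) t :> - (c * TT (flux f t))" by (rule DERIV_minus[OF c(2)])
  moreover have "- (c * TT (flux f t)) \<ge> 0" using assms(3)[OF tp] c(1) by (simp add: mult_nonneg_nonpos)
  ultimately show "\<exists>d. DERIV (\<lambda>y. - G (flux f y)) t :> d \<and> d \<ge> 0" by blast
qed

lemma TT_at:
  assumes "\<rho> > 0" shows "\<exists>x z. 0 < x \<and> x < f z \<and> flux f \<rho> = x"
  using flux_props[OF assms] Dom_def by blast

lemma main_convex:
  assumes "cvx f"
  shows "convex_on {0<..} (flux f) \<and> ((\<forall>\<rho>>0. deriv (deriv (flux f)) \<rho> > 0) \<longleftrightarrow> \<not> (\<exists>\<alpha> \<beta>. \<forall>n. f n = \<alpha> + \<beta> * real n))"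
proof
  have TTn: "TT (flux f \<rho>) \<ge> 0" if "\<rho> > 0" for \<rho>
    using TT_at[OF that] TT_convex[OF assms] by blast
  show "convex_on {0<..} (flux f)"
  proof (rule convex_on_realI[where f' = "\<lambda>y. G (flux f y)"])
    show "connected {0::real<..}" by simp
    show "\<And>x. x \<in> {0<..} \<Longrightarrow> DERIV (flux f) x :> G (flux f x)" using flux_deriv by auto
    show "\<And>x y. x \<in> {0<..} \<Longrightarrow> y \<in> {0<..} \<Longrightarrow> x \<le> y \<Longrightarrow> G (flux f x) \<le> G (flux f y)"
      using F1_mono TTn by auto
  qed
  show "(\<forall>\<rho>>0. deriv (deriv (flux f)) \<rho> > 0) \<longleftrightarrow> \<not> (\<exists>\<alpha> \<beta>. \<forall>n. f n = \<alpha> + \<beta> * real n)"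
  proof
    assume pos: "\<forall>\<rho>>0. deriv (deriv (flux f)) \<rho> > 0"
    show "\<not> (\<exists>\<alpha> \<beta>. \<forall>n. f n = \<alpha> + \<beta> * real n)"
    proof
      assume "\<exists>\<alpha> \<beta>. \<forall>n. f n = \<alpha> + \<beta> * real n"
      then obtain \<alpha> \<beta> where lin: "\<forall>n. f n = \<alpha> + \<beta> * real n" by blast
      obtain x z where xz: "0 < x" "x < f z" "flux f 1 = x" using TT_at[of 1] by auto
      obtain c where c: "c > 0" "deriv (deriv (flux f)) 1 = c * TT (flux f 1)" using dd_eq[of 1] by auto
      have "TT (flux f 1) = 0" using TT_linear[OF lin xz(1,2)] xz(3) by simp
      thus False using pos[rule_format, of 1] c by simp
    qed
  next
    assume nl: "\<not> (\<exists>\<alpha> \<beta>. \<forall>n. f n = \<alpha> + \<beta> * real n)"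
    show "\<forall>\<rho>>0. deriv (deriv (flux f)) \<rho> > 0"
    proof (intro allI impI)
      fix \<rho> :: real assume rp: "\<rho> > 0"
      obtain x z where xz: "0 < x" "x < f z" "flux f \<rho> = x" using TT_at[OF rp] by auto
      have "TT x > 0" using TT_convex[OF assms xz(1,2)] nl by auto
      moreover obtain c where "c > 0" "deriv (deriv (flux f)) \<rho> = c * TT (flux f \<rho>)" using dd_eq[OF rp] by auto
      ultimately show "deriv (deriv (flux f)) \<rho> > 0" using xz(3) by simp
    qed
  qed
qed

lemma main_concave:
  assumes "cvx (\<lambda>n. - f n)"
  shows "concave_on {0<..} (flux f) \<and> ((\<forall>\<rho>>0. deriv (deriv (flux f)) \<rho> < 0) \<longleftrightarrow> \<not> (\<exists>\<alpha> \<beta>. \<forall>n. f n = \<alpha> + \<beta> * real n))"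
proof
  have TTn: "TT (flux f \<rho>) \<le> 0" if "\<rho> > 0" for \<rho>
    using TT_at[OF that] TT_concave[OF assms] by blast
  show "concave_on {0<..} (flux f)"
    unfolding concave_on_def
  proof (rule convex_on_realI[where f' = "\<lambda>y. - G (flux f y)"])
    show "connected {0::real<..}" by simp
    show "\<And>x. x \<in> {0<..} \<Longrightarrow> DERIV (\<lambda>x. - flux f x) x :> - G (flux f x)" using flux_deriv by (auto intro: DERIV_minus)
    show "\<And>x y. x \<in> {0<..} \<Longrightarrow> y \<in> {0<..} \<Longrightarrow> x \<le> y \<Longrightarrow> - G (flux f x) \<le> - G (flux f y)"
      using F1_anti TTn by auto
  qed
  show "(\<forall>\<rho>>0. deriv (deriv (flux f)) \<rho> < 0) \<longleftrightarrow> \<not> (\<exists>\<alpha> \<beta>. \<forall>n. f n = \<alpha> + \<beta> * real n)"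
  proof
    assume neg: "\<forall>\<rho>>0. deriv (deriv (flux f)) \<rho> < 0"
    show "\<not> (\<exists>\<alpha> \<beta>. \<forall>n. f n = \<alpha> + \<beta> * real n)"
    proof
      assume "\<exists>\<alpha> \<beta>. \<forall>n. f n = \<alpha> + \<beta> * real n"
      then obtain \<alpha> \<beta> where lin: "\<forall>n. f n = \<alpha> + \<beta> * real n" by blast
      obtain x z where xz: "0 < x" "x < f z" "flux f 1 = x" using TT_at[of 1] by auto
      obtain c where c: "c > 0" "deriv (deriv (flux f)) 1 = c * TT (flux f 1)" using dd_eq[of 1] by auto
      have "TT (flux f 1) = 0" using TT_linear[OF lin xz(1,2)] xz(3) by simp
      thus False using neg[rule_format, of 1] c by simp
    qed
  next
    assume nl: "\<not> (\<exists>\<alpha> \<beta>. \<forall>n. f n = \<alpha> + \<beta> * real n)"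
    show "\<forall>\<rho>>0. deriv (deriv (flux f)) \<rho> < 0"
    proof (intro allI impI)
      fix \<rho> :: real assume rp: "\<rho> > 0"
      obtain x z where xz: "0 < x" "x < f z" "flux f \<rho> = x" using TT_at[OF rp] by auto
      have "TT x < 0" using TT_concave[OF assms xz(1,2)] nl by auto
      moreover obtain c where "c > 0" "deriv (deriv (flux f)) \<rho> = c * TT (flux f \<rho>)" using dd_eq[OF rp] by auto
      ultimately show "deriv (deriv (flux f)) \<rho> < 0" using xz(3) by (simp add: mult_pos_neg)
    qed
  qed
qed

end

theorem propositionC1:
  fixes f :: "nat \<Rightarrow> real"
  assumes "mono f" and "f 0 = 0" and "\<And>z. z > 0 \<Longrightarrow> f z > 0"
  shows "(convex_seq f \<longrightarrow>
            convex_on {0<..} (flux f) \<and>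
            ((\<forall>\<rho>>0. deriv (deriv (flux f)) \<rho> > 0) \<longleftrightarrow> \<not> linear_seq f))
       \<and> (concave_seq f \<longrightarrow>
            concave_on {0<..} (flux f) \<and>
            ((\<forall>\<rho>>0. deriv (deriv (flux f)) \<rho> < 0) \<longleftrightarrow> \<not> linear_seq f))"
proof -
  interpret zrp f using assms by unfold_locales
  have lin: "linear_seq f \<longleftrightarrow> (\<exists>\<alpha> \<beta>. \<forall>n. f n = \<alpha> + \<beta> * real n)"
    unfolding linear_seq_def by (metis add.commute mult.commute)
  have c1: "convex_seq f \<longleftrightarrow> cvx f" unfolding convex_seq_def cvx_def ..
  have c2: "concave_seq f \<longleftrightarrow> cvx (\<lambda>n. - f n)" unfolding concave_seq_def cvx_def by (intro iff_allI iffI) linarith+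
  show ?thesis unfolding lin c1 c2 using main_convex main_concave by blast
qed

end
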